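(* Let $\mathbb{K}$ be a field, let $P_1, P_2 \in \mathbb{K}[X]$ be irreducible, and let $f : \mathbb{K}[X]/(P_1) \to \mathbb{K}[X]/(P_2)$ be a ring isomorphism stabilizing $\mathbb{K}$. Then $S_f$ is coprime to $P_2$ if and only if $Q_f' \neq 0$.
   Context: A ring homomorphism $f : A \to B$ between $\mathbb{K}$-algebras stabilizes $\mathbb{K}$ if there is a field automorphism $\sigma_f$ of $\mathbb{K}$ with $f(a) = \sigma_f(a)$ for all $a \in \mathbb{K}$. For a field automorphism $\sigma$ of $\mathbb{K}$, $\sigma^X$ is the ring automorphism of $\mathbb{K}[X]$ applying $\sigma$ to coefficients; $A\circ Q$ denotes $A(Q(X))$; $'$ denotes the formal derivative. For a ring isomorphism $f : \mathbb{K}[X]/(P_1) \to \mathbb{K}[X]/(P_2)$ stabilizing $\mathbb{K}$: $Q_f$ is the unique polynomial of degree $< \deg P_2$ such that $f$ sends the class of $X$ to the class of $Q_f$, and $S_f \in \mathbb{K}[X]$ is the polynomial with $\sigma_f^X(P_1)\circ Q_f = S_f P_2$ (it exists because $\sigma_f^X(P_1)\circ Q_f$ is divisible by $P_2$). *)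

theory Defs
  imports "HOL-Computational_Algebra.Polynomial" "HOL-Computational_Algebra.Polynomial_Factorial"
begin

text \<open>The quotient ring K[X]/(P) is modelled by its canonical representatives:
  the polynomials r with r mod P = r (i.e. degree < degree P), with addition
  inherited from K[X] and multiplication followed by reduction mod P.\<close>

definition residues :: "'a::field poly \<Rightarrow> 'a poly set" where
  "residues P = {q. q mod P = q}"

definition field_automorphism :: "('a::field \<Rightarrow> 'a) \<Rightarrow> bool" where
  "field_automorphism \<sigma> \<longleftrightarrow> bij \<sigma> \<and> (\<forall>x y. \<sigma> (x + y) = \<sigma> x + \<sigma> y)
     \<and> (\<forall>x y. \<sigma> (x * y) = \<sigma> x * \<sigma> y) \<and> \<sigma> 1 = 1"

definition quot_ring_iso :: "'a::field poly \<Rightarrow> 'a poly \<Rightarrow> ('a poly \<Rightarrow> 'a poly) \<Rightarrow> bool" where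
  "quot_ring_iso P1 P2 f \<longleftrightarrow>
     bij_betw f (residues P1) (residues P2) \<and>
     (\<forall>a\<in>residues P1. \<forall>b\<in>residues P1.
        f (a + b) = f a + f b \<and> f ((a * b) mod P1) = (f a * f b) mod P2) \<and>
     f (1 mod P1) = 1 mod P2"

definition stabilizes_with :: "'a::field poly \<Rightarrow> 'a poly \<Rightarrow> ('a poly \<Rightarrow> 'a poly) \<Rightarrow> ('a \<Rightarrow> 'a) \<Rightarrow> bool" where
  "stabilizes_with P1 P2 f \<sigma> \<longleftrightarrow> field_automorphism \<sigma> \<and>
     (\<forall>c. f ([:c:] mod P1) = [:\<sigma> c:] mod P2)"

definition Qf :: "'a::field poly \<Rightarrow> 'a poly \<Rightarrow> ('a poly \<Rightarrow> 'a poly) \<Rightarrow> 'a poly" where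
  "Qf P1 P2 f = f ([:0, 1:] mod P1)"

text \<open>S_f: the polynomial with sigma^X(P1) o Q_f = S_f * P2.\<close>
definition Sf :: "'a::field poly \<Rightarrow> 'a poly \<Rightarrow> ('a poly \<Rightarrow> 'a poly) \<Rightarrow> ('a \<Rightarrow> 'a) \<Rightarrow> 'a poly" where
  "Sf P1 P2 f \<sigma> = pcompose (map_poly \<sigma> P1) (Qf P1 P2 f) div P2"

end

theory Submission
  imports Defs
begin

lemma taylor_X:
  fixes p Z :: "'a::idom poly"
  shows "\<exists>E. pcompose p ([:0,1:] + Z) = p + pderiv p * Z + Z^2 * E"
proof (induction p)
  case 0
  then show ?case by simp
next
  case (pCons a p)
  then obtain E where E: "pcompose p ([:0,1:] + Z) = p + pderiv p * Z + Z^2 * E" by blast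
  have x: "pCons a p = [:a:] + [:0,1:] * p" by (simp add: pCons_eq_iff)
  show ?case
    apply (rule exI[of _ "[:0,1:] * E + pderiv p + Z * E"])
    apply (simp add: pcompose_pCons E pderiv_pCons power2_eq_square)
    apply (subst x)
    apply (simp add: algebra_simps pCons_one)
    done
qed

lemma pcompose_dvd_cong:
  fixes p :: "'a::comm_ring_1 poly"
  assumes "m dvd a - b"
  shows "m dvd pcompose p a - pcompose p b"
proof (induction p)
  case 0
  then show ?case by simp
next
  case (pCons c p)
  have "pcompose (pCons c p) a - pcompose (pCons c p) b
      = (a - b) * pcompose p a + b * (pcompose p a - pcompose p b)"
    by (simp add: pcompose_pCons algebra_simps)
  then show ?case using pCons assms by (simp add: dvd_add dvd_mult2 dvd_mult)
qed

lemma map_poly_hom_add: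
  assumes "\<And>x y. \<sigma> (x + y) = \<sigma> x + \<sigma> y" "\<sigma> 0 = 0"
  shows "map_poly \<sigma> (p + q) = map_poly \<sigma> p + map_poly \<sigma> q"
  by (rule poly_eqI) (simp add: coeff_map_poly assms)

lemma map_poly_hom_diff:
  fixes \<sigma> :: "'a::comm_ring_1 \<Rightarrow> 'b::comm_ring_1"
  assumes "\<And>x y. \<sigma> (x + y) = \<sigma> x + \<sigma> y"
  shows "map_poly \<sigma> (p - q) = map_poly \<sigma> p - map_poly \<sigma> q"
proof -
  have z: "\<sigma> 0 = 0" using assms[of 0 0] by simp
  have d: "\<sigma> (x - y) = \<sigma> x - \<sigma> y" for x y
    using assms[of "x - y" y] by (simp add: algebra_simps)
  show ?thesis by (rule poly_eqI) (simp add: coeff_map_poly z d)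
qed

lemma map_poly_hom_smult:
  assumes "\<And>x y. \<sigma> (x * y) = \<sigma> x * \<sigma> y" "\<sigma> 0 = 0"
  shows "map_poly \<sigma> (smult a q) = smult (\<sigma> a) (map_poly \<sigma> q)"
  by (rule poly_eqI) (simp add: coeff_map_poly assms)

lemma map_poly_hom_mult:
  fixes \<sigma> :: "'a::comm_ring_1 \<Rightarrow> 'b::comm_ring_1"
  assumes "\<And>x y. \<sigma> (x + y) = \<sigma> x + \<sigma> y" "\<And>x y. \<sigma> (x * y) = \<sigma> x * \<sigma> y"
  shows "map_poly \<sigma> (p * q) = map_poly \<sigma> p * map_poly \<sigma> q"
proof (induction p)
  case 0
  then show ?case by simp
next
  case (pCons a p)
  have z: "\<sigma> 0 = 0" using assms(1)[of 0 0] by simp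
  show ?case
    by (simp add: map_poly_hom_add[OF assms(1) z] map_poly_hom_smult[OF assms(2) z]
        map_poly_pCons z pCons)
qed

lemma map_poly_hom_pcompose:
  fixes \<sigma> :: "'a::comm_ring_1 \<Rightarrow> 'b::comm_ring_1"
  assumes "\<And>x y. \<sigma> (x + y) = \<sigma> x + \<sigma> y" "\<And>x y. \<sigma> (x * y) = \<sigma> x * \<sigma> y"
  shows "map_poly \<sigma> (pcompose p q) = pcompose (map_poly \<sigma> p) (map_poly \<sigma> q)"
proof (induction p)
  case 0
  then show ?case by simp
next
  case (pCons a p)
  have z: "\<sigma> 0 = 0" using assms(1)[of 0 0] by simp
  show ?case
    by (simp add: pcompose_pCons map_poly_hom_add[OF assms(1) z] map_poly_hom_mult[OF assms]
        map_poly_pCons z pCons)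
qed


lemma key_hom:
  fixes P1 P2 :: "'a::field poly"
  assumes iso: "quot_ring_iso P1 P2 f" and st: "stabilizes_with P1 P2 f \<sigma>"
  shows "f (A mod P1) = pcompose (map_poly \<sigma> A) (Qf P1 P2 f) mod P2"
proof (induction A)
  case 0
  have "(0::'a poly) \<in> residues P1" by (simp add: residues_def)
  then have "f (0 + 0) = f 0 + f 0" using iso unfolding quot_ring_iso_def by blast
  then have "f 0 + f 0 = f 0 + 0" by simp
  then show ?case by (simp only: add_left_imp_eq mod_0 pcompose_0 map_poly_0)
next
  case (pCons a A)
  have fa: "field_automorphism \<sigma>" using st unfolding stabilizes_with_def by blast
  have z: "\<sigma> 0 = 0" using fa unfolding field_automorphism_def
    by (metis add_cancel_right_right)
  let ?X = "[:0,1:] :: 'a poly"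
  let ?Q = "Qf P1 P2 f"
  have x: "pCons a A = [:a:] + ?X * A" by (simp add: pCons_eq_iff)
  have m: "pCons a A mod P1 = [:a:] mod P1 + ((?X mod P1) * (A mod P1)) mod P1"
  proof -
    have "pCons a A mod P1 = [:a:] mod P1 + (?X * A) mod P1" by (subst x) (rule poly_mod_add_left)
    then show ?thesis by (simp only: mod_mult_eq)
  qed
  have r1: "[:a:] mod P1 \<in> residues P1" "((?X mod P1) * (A mod P1)) mod P1 \<in> residues P1"
    "?X mod P1 \<in> residues P1" "A mod P1 \<in> residues P1"
    by (simp_all add: residues_def)
  have hom: "\<And>a b. a \<in> residues P1 \<Longrightarrow> b \<in> residues P1 \<Longrightarrow>
        f (a + b) = f a + f b \<and> f ((a * b) mod P1) = (f a * f b) mod P2"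
    using iso unfolding quot_ring_iso_def by blast
  have "f (pCons a A mod P1) = f ([:a:] mod P1) + f (((?X mod P1) * (A mod P1)) mod P1)"
    using m hom r1 by simp
  also have "\<dots> = [:\<sigma> a:] mod P2 + (?Q * (pcompose (map_poly \<sigma> A) ?Q mod P2)) mod P2"
    using st hom[OF r1(3,4)] pCons unfolding stabilizes_with_def Qf_def by simp
  also have "\<dots> = ([:\<sigma> a:] + ?Q * pcompose (map_poly \<sigma> A) ?Q) mod P2"
    by (simp add: poly_mod_add_left mod_mult_right_eq)
  also have "\<dots> = pcompose (map_poly \<sigma> (pCons a A)) ?Q mod P2"
    by (simp add: map_poly_pCons z pcompose_pCons)
  finally show ?case .
qed


lemma degree_pderiv_less:
  fixes p :: "'a::idom poly"
  assumes "pderiv p \<noteq> 0"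
  shows "degree (pderiv p) < degree p"
proof (rule ccontr)
  assume "\<not> ?thesis"
  then have "Suc (degree (pderiv p)) > degree p" by simp
  then have "coeff p (Suc (degree (pderiv p))) = 0" by (rule coeff_eq_0)
  then have "coeff (pderiv p) (degree (pderiv p)) = 0" by (simp add: coeff_pderiv)
  then show False using assms by simp
qed

theorem mainTheorem12:
  fixes P1 P2 :: "'a::field poly" and f :: "'a poly \<Rightarrow> 'a poly" and \<sigma> :: "'a \<Rightarrow> 'a"
  assumes "irreducible P1" and "irreducible P2"
    and "quot_ring_iso P1 P2 f"
    and "stabilizes_with P1 P2 f \<sigma>"
  shows "coprime (Sf P1 P2 f \<sigma>) P2 \<longleftrightarrow> pderiv (Qf P1 P2 f) \<noteq> 0"
proof -
  note iso = assms(3) and st = assms(4)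
  define X where "X = ([:0,1:] :: 'a poly)"
  define Q where "Q = Qf P1 P2 f"
  define T where "T = map_poly \<sigma> P1"
  define S where "S = Sf P1 P2 f \<sigma>"
  have key: "\<And>A. f (A mod P1) = pcompose (map_poly \<sigma> A) Q mod P2"
    using key_hom[OF iso st] Q_def by simp
  have fa: "field_automorphism \<sigma>" using st unfolding stabilizes_with_def by blast
  have sadd: "\<And>x y. \<sigma> (x + y) = \<sigma> x + \<sigma> y" and smul: "\<And>x y. \<sigma> (x * y) = \<sigma> x * \<sigma> y"
    and sbij: "bij \<sigma>" and s1: "\<sigma> 1 = 1"
    using fa unfolding field_automorphism_def by blast+
  have z: "\<sigma> 0 = 0" using sadd[of 0 0] by (metis add_cancel_right_right add_0)
  have prime2: "prime_elem P2" using assms(2) by (rule field_poly_irreducible_imp_prime)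
  have P2nz: "P2 \<noteq> 0" using prime2 by auto
  have P2nu: "\<not> is_unit P2" using prime2 by (auto simp: prime_elem_def)
  have bij: "bij_betw f (residues P1) (residues P2)" using iso unfolding quot_ring_iso_def by blast
  have f0: "f 0 = 0" using key[of 0] by simp
  have Qres: "Q mod P2 = Q"
  proof -
    have "X mod P1 \<in> residues P1" by (simp add: residues_def)
    then have "f (X mod P1) \<in> residues P2" using bij bij_betwE by blast
    then show ?thesis unfolding Q_def Qf_def X_def residues_def by simp
  qed
  have "pcompose T Q mod P2 = 0" using key[of P1] f0 T_def by simp
  then have TQ: "pcompose T Q = S * P2"
    unfolding S_def Sf_def T_def[symmetric] Q_def[symmetric]
    by (metis add_0_right div_mult_mod_eq)
  have injl: "T dvd A' - B'" if h: "pcompose A' Q mod P2 = pcompose B' Q mod P2" for A' B'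
  proof -
    define \<tau> where "\<tau> = inv \<sigma>"
    have st': "\<sigma> (\<tau> x) = x" for x using sbij unfolding \<tau>_def by (simp add: bij_is_surj surj_f_inv_f)
    have t0: "\<tau> 0 = 0" using st'[of 0] z sbij unfolding \<tau>_def by (metis bij_inv_eq_iff)
    have mm: "map_poly \<sigma> (map_poly \<tau> C) = C" for C
      by (simp add: map_poly_map_poly z t0 o_def st')
    define A where "A = map_poly \<tau> A'"
    define B where "B = map_poly \<tau> B'"
    have "f (A mod P1) = f (B mod P1)" using key[of A] key[of B] h mm A_def B_def by simp
    moreover have "A mod P1 \<in> residues P1" "B mod P1 \<in> residues P1" by (simp_all add: residues_def)
    ultimately have "A mod P1 = B mod P1" using bij unfolding bij_betw_def inj_on_def by blast
    then have "P1 dvd A - B" by (simp add: mod_eq_dvd_iff)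
    then obtain C where "A - B = P1 * C" by blast
    then have "map_poly \<sigma> (A - B) = T * map_poly \<sigma> C"
      using map_poly_hom_mult[OF sadd smul] T_def by simp
    then show ?thesis using map_poly_hom_diff[OF sadd] mm A_def B_def by (metis dvd_triv_left)
  qed
  obtain Qt where Qt: "Qt \<in> residues P1" "f Qt = X mod P2"
  proof -
    have "X mod P2 \<in> residues P2" by (simp add: residues_def)
    then show ?thesis using bij that by (metis bij_betw_iff_bijections)
  qed
  define R where "R = map_poly \<sigma> Qt"
  have "pcompose R Q mod P2 = X mod P2"
    using key[of Qt] Qt unfolding R_def residues_def by simp
  then have "P2 dvd pcompose R Q - X" by (simp add: mod_eq_dvd_iff)
  then obtain H where H0: "pcompose R Q - X = P2 * H" by blast
  then have H: "pcompose R Q = X + P2 * H" by (simp add: algebra_simps)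
  have PX: "pcompose p (pcompose R Q) mod P2 = p mod P2" for p
  proof -
    have "P2 dvd pcompose p (pcompose R Q) - pcompose p X"
      by (rule pcompose_dvd_cong) (simp add: H0)
    then show ?thesis by (simp add: mod_eq_dvd_iff X_def)
  qed
  have XQ: "pcompose X Q = Q" by (simp add: X_def pcompose_pCons)
  have "T dvd pcompose P2 R - 0"
    by (rule injl) (simp add: pcompose_assoc[symmetric] PX)
  then obtain W where W: "pcompose P2 R = T * W" by auto
  have "T dvd pcompose Q R - X"
    by (rule injl) (simp add: pcompose_assoc[symmetric] PX XQ Qres)
  then obtain J where J: "pcompose Q R = X + T * J" by (metis add_diff_cancel_left' diff_add_cancel dvdE)
  have pX: "pderiv X = 1" by (simp add: X_def pderiv_pCons)
  have fwd: "P2 dvd pderiv Q" if hS: "P2 dvd S"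
  proof -
    obtain E where E: "pcompose P2 (X + P2 * H) = P2 + pderiv P2 * (P2 * H) + (P2 * H)^2 * E"
      using taylor_X[of P2 "P2 * H"] X_def by blast
    have "pcompose P2 (pcompose R Q) = pcompose (T * W) Q" by (simp add: pcompose_assoc W)
    also have "\<dots> = P2 * (S * pcompose W Q)" by (simp add: pcompose_mult TQ algebra_simps)
    finally have "P2 * (S * pcompose W Q) = P2 * (1 + pderiv P2 * H + P2 * H^2 * E)"
      using E H by (simp add: algebra_simps power2_eq_square)
    then have e1: "S * pcompose W Q = 1 + pderiv P2 * H + P2 * H^2 * E" using P2nz by simp
    have nH: "\<not> P2 dvd H"
    proof
      assume "P2 dvd H"
      moreover have "P2 dvd S * pcompose W Q" using hS by simp
      ultimately have "P2 dvd (S * pcompose W Q) - pderiv P2 * H - P2 * H^2 * E" by simp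
      then have "P2 dvd 1" using e1 by simp
      then show False using P2nu by simp
    qed
    obtain E2 where E2: "pcompose Q (X + P2 * H) = Q + pderiv Q * (P2 * H) + (P2 * H)^2 * E2"
      using taylor_X[of Q "P2 * H"] X_def by blast
    have "pcompose Q (pcompose R Q) = pcompose (X + T * J) Q" by (simp add: pcompose_assoc J)
    also have "\<dots> = Q + P2 * (S * pcompose J Q)"
      by (simp add: pcompose_add pcompose_mult TQ XQ algebra_simps)
    finally have "P2 * (S * pcompose J Q) = P2 * (pderiv Q * H + P2 * H^2 * E2)"
      using E2 H by (simp add: algebra_simps power2_eq_square)
    then have "S * pcompose J Q = pderiv Q * H + P2 * H^2 * E2" using P2nz by simp
    then have "pderiv Q * H = S * pcompose J Q - P2 * H^2 * E2" by simp
    moreover have "P2 dvd S * pcompose J Q - P2 * H^2 * E2" using hS by simp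
    ultimately have "P2 dvd pderiv Q * H" by simp
    then show ?thesis using nH prime2 by (simp add: prime_elem_dvd_mult_iff)
  qed
  have bwd: "P2 dvd S" if hQ: "P2 dvd pderiv Q"
  proof (cases "pderiv P2 = 0")
    case True
    have "pcompose (pderiv R) Q * pderiv Q = 1 + P2 * pderiv H"
      using arg_cong[OF H, of pderiv] True by (simp add: pderiv_pcompose pderiv_add pderiv_mult pX)
    moreover have "P2 dvd pcompose (pderiv R) Q * pderiv Q" using hQ by simp
    ultimately have "P2 dvd 1 + P2 * pderiv H - P2 * pderiv H" by (metis dvd_diff dvd_triv_left)
    then have "P2 dvd 1" by simp
    then show ?thesis using P2nu by simp
  next
    case False
    have "pcompose (pderiv T) Q * pderiv Q = S * pderiv P2 + pderiv S * P2"
      using arg_cong[OF TQ, of pderiv] by (simp add: pderiv_pcompose pderiv_mult)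
    moreover have "P2 dvd pcompose (pderiv T) Q * pderiv Q" using hQ by simp
    ultimately have "P2 dvd S * pderiv P2 + pderiv S * P2 - pderiv S * P2" by (metis dvd_diff dvd_triv_right)
    then have "P2 dvd S * pderiv P2" by simp
    moreover have "\<not> P2 dvd pderiv P2"
    proof
      assume "P2 dvd pderiv P2"
      then have "degree P2 \<le> degree (pderiv P2)" using False dvd_imp_degree_le by blast
      moreover have "degree P2 \<noteq> 0"
      proof
        assume "degree P2 = 0"
        then obtain c where "P2 = [:c:]" by (rule degree_eq_zeroE)
        then have "pderiv P2 = 0" by (simp add: pderiv_pCons)
        then show False using False by simp
      qed
      ultimately show False using degree_pderiv_less[OF False] by linarith
    qed
    ultimately show ?thesis using prime2 by (simp add: prime_elem_dvd_mult_iff)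
  qed
  have c1: "coprime S P2 \<longleftrightarrow> \<not> P2 dvd S"
  proof
    assume "coprime S P2"
    then show "\<not> P2 dvd S" using P2nu by (metis coprime_common_divisor dvd_refl)
  next
    assume "\<not> P2 dvd S"
    then show "coprime S P2"
    proof (intro coprimeI)
      fix c assume nd: "\<not> P2 dvd S" and cS: "c dvd S" and cP: "c dvd P2"
      then obtain d where d: "P2 = c * d" by blast
      then have "is_unit c \<or> is_unit d" using assms(2) irreducibleD by blast
      moreover have "\<not> is_unit d"
      proof
        assume "is_unit d"
        then have "P2 dvd c" using d by (simp add: mult_unit_dvd_iff')
        then show False using cS nd dvd_trans by blast
      qed
      ultimately show "is_unit c" by blast
    qed
  qed
  have c2: "P2 dvd pderiv Q \<longleftrightarrow> pderiv Q = 0"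
  proof
    assume d: "P2 dvd pderiv Q"
    show "pderiv Q = 0"
    proof (rule ccontr)
      assume nz: "pderiv Q \<noteq> 0"
      then have "Q \<noteq> 0" by auto
      then have "degree Q < degree P2" using degree_mod_less[OF P2nz, of Q] Qres by simp
      moreover have "degree P2 \<le> degree (pderiv Q)" using d nz dvd_imp_degree_le by blast
      ultimately show False using degree_pderiv_less[OF nz] by linarith
    qed
  qed simp
  show ?thesis using fwd bwd c1 c2 unfolding S_def[symmetric] Q_def[symmetric] by blast
qed

end
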